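(* Let $\mathcal{F}$ be a fusion ring with structure constants $(N_{i,j}^k)$, indexed so that index $1$ is the unit. Suppose indices $i_1,\dots,i_9$ satisfy $N_{i_4,i_1}^{i_6},\ N_{i_5,i_4}^{i_2},\ N_{i_5,i_6}^{i_3},\ N_{i_7,i_9}^{i_1},\ N_{i_2,i_7}^{i_8},\ N_{i_8,i_9}^{i_3}\neq0$ and $\sum_kN_{i_4,i_7}^kN_{i_5^*,i_8}^kN_{i_6,i_9^*}^k=0$. Then $i_j\neq1$ for all $j\in\{4,\dots,9\}$.
   Context: A fusion ring is a ring which is a free $\mathbb{Z}$-module with finite basis $\{b_1,\dots,b_r\}$, $b_ib_j=\sum_kN_{i,j}^kb_k$, $N_{i,j}^k\in\mathbb{Z}_{\ge0}$, associative, unit $b_1$, duality $i\mapsto i^*$ with $N_{i,k}^1=N_{k,i}^1=\delta_{i^*,k}$, and Frobenius reciprocity $N_{i,j}^k=N_{i^*,k}^j=N_{k,j^*}^i$. *)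

theory Defs
  imports Main
begin

text \<open>Index 0 plays the role of the unit b_1 of the paper.
N i j k is the coefficient of b_k in b_i b_j; dual i is i^*.\<close>

definition fusion_ring :: "nat \<Rightarrow> (nat \<Rightarrow> nat \<Rightarrow> nat \<Rightarrow> nat) \<Rightarrow> (nat \<Rightarrow> nat) \<Rightarrow> bool" where
  "fusion_ring r N dual \<longleftrightarrow>
     0 < r \<and>
     (\<forall>i<r. dual i < r) \<and>
     \<comment> \<open>associativity: (b_i b_j) b_k = b_i (b_j b_k)\<close>
     (\<forall>i<r. \<forall>j<r. \<forall>k<r. \<forall>l<r.
        (\<Sum>m<r. N i j m * N m k l) = (\<Sum>m<r. N i m l * N j k m)) \<and>
     \<comment> \<open>unit b_0\<close>
     (\<forall>i<r. \<forall>k<r. N 0 i k = (if i = k then 1 else 0) \<and> N i 0 k = (if i = k then 1 else 0)) \<and>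
     \<comment> \<open>duality\<close>
     (\<forall>i<r. \<forall>k<r. N i k 0 = (if dual i = k then 1 else 0) \<and> N k i 0 = (if dual i = k then 1 else 0)) \<and>
     \<comment> \<open>Frobenius reciprocity\<close>
     (\<forall>i<r. \<forall>j<r. \<forall>k<r. N i j k = N (dual i) k j \<and> N i j k = N k (dual j) i)"

end

theory Submission
  imports Defs
begin

lemma fr_frobA: "fusion_ring r N dual \<Longrightarrow> (\<forall>i<r. \<forall>j<r. \<forall>k<r. N i j k = N (dual i) k j \<and> N i j k = N k (dual j) i)"
  unfolding fusion_ring_def by (elim conjE) assumption
lemma fr_unitA: "fusion_ring r N dual \<Longrightarrow> (\<forall>i<r. \<forall>k<r. N 0 i k = (if i = k then 1 else 0) \<and> N i 0 k = (if i = k then 1 else 0))"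
  unfolding fusion_ring_def by (elim conjE) assumption
lemma fr_dualA: "fusion_ring r N dual \<Longrightarrow> (\<forall>i<r. \<forall>k<r. N i k 0 = (if dual i = k then 1 else 0) \<and> N k i 0 = (if dual i = k then 1 else 0))"
  unfolding fusion_ring_def by (elim conjE) assumption
lemma fr_dual_lt: "fusion_ring r N dual \<Longrightarrow> i < r \<Longrightarrow> dual i < r"
  unfolding fusion_ring_def by (elim conjE) blast
lemma fr_pos: "fusion_ring r N dual \<Longrightarrow> 0 < r"
  unfolding fusion_ring_def by (elim conjE) assumption
lemma fr_frob2: "fusion_ring r N dual \<Longrightarrow> i < r \<Longrightarrow> j < r \<Longrightarrow> k < r \<Longrightarrow> N i j k = N k (dual j) i"
  using fr_frobA by blast
lemma fr_frob1: "fusion_ring r N dual \<Longrightarrow> i < r \<Longrightarrow> j < r \<Longrightarrow> k < r \<Longrightarrow> N i j k = N (dual i) k j"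
  using fr_frobA by blast
lemma fr_unitL: "fusion_ring r N dual \<Longrightarrow> i < r \<Longrightarrow> k < r \<Longrightarrow> N 0 i k = (if i = k then 1 else 0)"
  using fr_unitA by blast
lemma fr_unitR: "fusion_ring r N dual \<Longrightarrow> i < r \<Longrightarrow> k < r \<Longrightarrow> N i 0 k = (if i = k then 1 else 0)"
  using fr_unitA by blast
lemma fr_dualL: "fusion_ring r N dual \<Longrightarrow> i < r \<Longrightarrow> k < r \<Longrightarrow> N i k 0 = (if dual i = k then 1 else 0)"
  using fr_dualA by blast
lemma fr_dualR: "fusion_ring r N dual \<Longrightarrow> i < r \<Longrightarrow> k < r \<Longrightarrow> N k i 0 = (if dual i = k then 1 else 0)"
  using fr_dualA by blast

lemma fr_dual0: assumes "fusion_ring r N dual" shows "dual 0 = 0"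
proof -
  have p: "0 < r" by (rule fr_pos[OF assms])
  have 1: "N 0 0 0 = 1" using fr_unitL[OF assms p p] by simp
  have 2: "N 0 0 0 = (if dual 0 = 0 then 1 else 0)" by (rule fr_dualL[OF assms p p])
  show ?thesis using 1 2 by (cases "dual 0 = 0") auto
qed

lemma fr_cyc: assumes "fusion_ring r N dual" "a < r" "b < r" "c < r"
  shows "N a b (dual c) = N b c (dual a)"
proof -
  have dc: "dual c < r" "dual a < r" using fr_dual_lt[OF assms(1)] assms by auto
  have 1: "N a b (dual c) = N (dual a) (dual c) b" by (rule fr_frob1[OF assms(1) assms(2) assms(3) dc(1)])
  have 2: "N b c (dual a) = N (dual a) (dual c) b" by (rule fr_frob2[OF assms(1) assms(3) assms(4) dc(2)])
  show ?thesis unfolding 1 2 ..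
qed

lemma fr_invol: assumes "fusion_ring r N dual" "i < r" shows "dual (dual i) = i"
proof -
  have d: "dual i < r" by (rule fr_dual_lt[OF assms])
  have 1: "N (dual i) i 0 = 1" using fr_dualR[OF assms(1) assms(2) d] by simp
  have 2: "N (dual i) i 0 = (if dual (dual i) = i then 1 else 0)" by (rule fr_dualL[OF assms(1) d assms(2)])
  show ?thesis using 1 2 by (cases "dual (dual i) = i") auto
qed

lemma sum_nz: fixes f :: "nat \<Rightarrow> nat" assumes "k0 < r" "f k0 \<noteq> 0" shows "(\<Sum>k<r. f k) \<noteq> 0"
  using assms by (auto simp add: sum_eq_0_iff)

theorem lemma7p14:
  fixes r :: nat and N :: "nat \<Rightarrow> nat \<Rightarrow> nat \<Rightarrow> nat" and dual :: "nat \<Rightarrow> nat"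
    and i1 i2 i3 i4 i5 i6 i7 i8 i9 :: nat
  assumes "fusion_ring r N dual"
    and "i1 < r" "i2 < r" "i3 < r" "i4 < r" "i5 < r" "i6 < r" "i7 < r" "i8 < r" "i9 < r"
    and "N i4 i1 i6 \<noteq> 0" "N i5 i4 i2 \<noteq> 0" "N i5 i6 i3 \<noteq> 0"
    and "N i7 i9 i1 \<noteq> 0" "N i2 i7 i8 \<noteq> 0" "N i8 i9 i3 \<noteq> 0"
    and "(\<Sum>k<r. N i4 i7 k * N (dual i5) i8 k * N i6 (dual i9) k) = 0"
  shows "i4 \<noteq> 0 \<and> i5 \<noteq> 0 \<and> i6 \<noteq> 0 \<and> i7 \<noteq> 0 \<and> i8 \<noteq> 0 \<and> i9 \<noteq> 0"
proof -
  note F = assms(1)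
  note lt = assms(2-10)
  note D = fr_dual_lt[OF F]
  note S = assms(17)
  have d0: "dual 0 = 0" by (rule fr_dual0[OF F])
  have P: "\<And>k0. k0 < r \<Longrightarrow> N i4 i7 k0 \<noteq> 0 \<Longrightarrow> N (dual i5) i8 k0 \<noteq> 0 \<Longrightarrow> N i6 (dual i9) k0 \<noteq> 0 \<Longrightarrow> False"
  proof -
    fix k0 assume h: "k0 < r" "N i4 i7 k0 \<noteq> 0" "N (dual i5) i8 k0 \<noteq> 0" "N i6 (dual i9) k0 \<noteq> 0"
    have "N i4 i7 k0 * N (dual i5) i8 k0 * N i6 (dual i9) k0 \<noteq> 0" using h(2-4) by simp
    thus False using sum_nz[of k0 r "\<lambda>k. N i4 i7 k * N (dual i5) i8 k * N i6 (dual i9) k"] S h(1) by blast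
  qed
  have "i4 \<noteq> 0"
  proof
    assume z: "i4 = 0"
    have e1: "i1 = i6" using assms(11) fr_unitL[OF F, of i1 i6] lt z by (simp split: if_splits)
    have e2: "i5 = i2" using assms(12) fr_unitR[OF F, of i5 i2] lt z by (simp split: if_splits)
    have a: "N i4 i7 i7 \<noteq> 0" using fr_unitL[OF F, of i7 i7] lt z by simp
    have b: "N (dual i5) i8 i7 \<noteq> 0" using fr_frob1[OF F, of i2 i7 i8] assms(15) lt e2 by simp
    have c: "N i6 (dual i9) i7 \<noteq> 0" using fr_frob2[OF F, of i7 i9 i1] assms(14) lt e1 by simp
    show False using P[OF _ a b c] lt by blast
  qed
  moreover have "i5 \<noteq> 0"
  proof
    assume z: "i5 = 0"
    have e1: "i4 = i2" using assms(12) fr_unitL[OF F, of i4 i2] lt z by (simp split: if_splits)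
    have e2: "i6 = i3" using assms(13) fr_unitL[OF F, of i6 i3] lt z by (simp split: if_splits)
    have a: "N i4 i7 i8 \<noteq> 0" using assms(15) e1 by simp
    have b: "N (dual i5) i8 i8 \<noteq> 0" using fr_unitL[OF F, of i8 i8] lt z d0 by simp
    have c: "N i6 (dual i9) i8 \<noteq> 0" using fr_frob2[OF F, of i8 i9 i3] assms(16) lt e2 by simp
    show False using P[OF _ a b c] lt by blast
  qed
  moreover have "i6 \<noteq> 0"
  proof
    assume z: "i6 = 0"
    have e1: "dual i4 = i1" using assms(11) fr_dualL[OF F, of i4 i1] lt z by (simp split: if_splits)
    have e2: "i5 = i3" using assms(13) fr_unitR[OF F, of i5 i3] lt z by (simp split: if_splits)
    have a: "N i4 i7 (dual i9) \<noteq> 0"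
      using fr_cyc[OF F, of i7 i9 i4] fr_cyc[OF F, of i9 i4 i7] assms(14) lt e1 by simp
    have b: "N (dual i5) i8 (dual i9) \<noteq> 0"
      using fr_cyc[OF F, of i8 i9 "dual i3"] fr_cyc[OF F, of i9 "dual i3" i8] fr_invol[OF F, of i3] assms(16) lt D[of i3] e2 by simp
    have c: "N i6 (dual i9) (dual i9) \<noteq> 0" using fr_unitL[OF F, of "dual i9" "dual i9"] lt D[of i9] z by simp
    show False using P[OF _ a b c] lt D by blast
  qed
  moreover have "i7 \<noteq> 0"
  proof
    assume z: "i7 = 0"
    have e1: "i9 = i1" using assms(14) fr_unitL[OF F, of i9 i1] lt z by (simp split: if_splits)
    have e2: "i2 = i8" using assms(15) fr_unitR[OF F, of i2 i8] lt z by (simp split: if_splits)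
    have a: "N i4 i7 i4 \<noteq> 0" using fr_unitR[OF F, of i4 i4] lt z by simp
    have b: "N (dual i5) i8 i4 \<noteq> 0" using fr_frob1[OF F, of i5 i4 i2] assms(12) lt e2 by simp
    have c: "N i6 (dual i9) i4 \<noteq> 0" using fr_frob2[OF F, of i4 i1 i6] assms(11) lt e1 by simp
    show False using P[OF _ a b c] lt by blast
  qed
  moreover have "i8 \<noteq> 0"
  proof
    assume z: "i8 = 0"
    have e1: "dual i2 = i7" using assms(15) fr_dualL[OF F, of i2 i7] lt z by (simp split: if_splits)
    have e2: "i9 = i3" using assms(16) fr_unitL[OF F, of i9 i3] lt z by (simp split: if_splits)
    have a: "N i4 i7 (dual i5) \<noteq> 0"
      using fr_cyc[OF F, of i5 i4 "dual i2"] fr_invol[OF F, of i2] assms(12) lt D[of i2] e1 by simp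
    have c: "N i6 (dual i9) (dual i5) \<noteq> 0"
      using fr_cyc[OF F, of i5 i6 "dual i3"] fr_invol[OF F, of i3] assms(13) lt D[of i3] e2 by simp
    have b: "N (dual i5) i8 (dual i5) \<noteq> 0" using fr_unitR[OF F, of "dual i5" "dual i5"] lt D[of i5] z by simp
    show False using P[OF _ a b c] lt D by blast
  qed
  moreover have "i9 \<noteq> 0"
  proof
    assume z: "i9 = 0"
    have e1: "i7 = i1" using assms(14) fr_unitR[OF F, of i7 i1] lt z by (simp split: if_splits)
    have e2: "i8 = i3" using assms(16) fr_unitR[OF F, of i8 i3] lt z by (simp split: if_splits)
    have a: "N i4 i7 i6 \<noteq> 0" using assms(11) e1 by simp
    have b: "N (dual i5) i8 i6 \<noteq> 0" using fr_frob1[OF F, of i5 i6 i3] assms(13) lt e2 by simp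
    have c: "N i6 (dual i9) i6 \<noteq> 0" using fr_unitR[OF F, of i6 i6] lt z d0 by simp
    show False using P[OF _ a b c] lt by blast
  qed
  ultimately show ?thesis by blast
qed

end
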